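(* Let $X$ be a complete CAT(0) space, $f:X\to(-\infty,\infty]$ a convex, proper, lower semicontinuous function, and $(\gamma_n)$ a sequence of positive reals. Then the family $(J_{\gamma_n})_{n\in\mathbb{N}}$ of resolvents of $f$ is jointly firmly nonexpansive with respect to $(\gamma_n)$.
   Context: A geodesic space $(X,d)$ is CAT(0) if for all $z\in X$, all geodesics $\gamma:[a,b]\to X$ and all $t\in[0,1]$, $d^2(z,\gamma((1-t)a+tb))\le(1-t)d^2(z,\gamma(a))+td^2(z,\gamma(b))-t(1-t)d^2(\gamma(a),\gamma(b))$; $(1-t)x+ty$ denotes the point at distance $t\,d(x,y)$ from $x$ on the unique geodesic from $x$ to $y$. For $\gamma>0$, the resolvent (proximal mapping) of $f$ of order $\gamma$ is $J_\gamma:X\to X$, $J_\gamma(x):=\arg\min_{y\in X}\left[f(y)+\frac1{2\gamma}d^2(x,y)\right]$ (the minimizer exists and is unique). $(T_n)$ is jointly firmly nonexpansive w.r.t. $(\gamma_n)$ if for all $n,m$, $x,y\in X$, $\alpha,\beta\in[0,1]$ with $(1-\alpha)\gamma_n=(1-\beta)\gamma_m$: $d(T_nx,T_my)\le d((1-\alpha)x+\alpha T_nx,(1-\beta)y+\beta T_my)$. *)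

theory Defs
  imports "HOL-Analysis.Analysis" "HOL-Library.Extended_Real"
begin

definition geodesic_on :: "(real \<Rightarrow> 'a::metric_space) \<Rightarrow> real \<Rightarrow> real \<Rightarrow> bool" where
  "geodesic_on g a b \<longleftrightarrow> a \<le> b \<and>
     (\<forall>s\<in>{a..b}. \<forall>t\<in>{a..b}. dist (g s) (g t) = \<bar>s - t\<bar>)"

definition geodesic_space :: "'a::metric_space itself \<Rightarrow> bool" where
  "geodesic_space _ \<longleftrightarrow>
     (\<forall>x y::'a. \<exists>g. geodesic_on g 0 (dist x y) \<and> g 0 = x \<and> g (dist x y) = y)"

definition CAT0 :: "'a::metric_space itself \<Rightarrow> bool" where
  "CAT0 T \<longleftrightarrow> geodesic_space T \<and>
     (\<forall>(z::'a) g a b t. geodesic_on g a b \<and> 0 \<le> t \<and> t \<le> 1 \<longrightarrow>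
        (dist z (g ((1 - t) * a + t * b)))\<^sup>2
          \<le> (1 - t) * (dist z (g a))\<^sup>2 + t * (dist z (g b))\<^sup>2
             - t * (1 - t) * (dist (g a) (g b))\<^sup>2)"

text \<open>(1-t)x + t y: the point at distance t d(x,y) from x on the (unique) geodesic from x to y.\<close>
definition geo_comb :: "real \<Rightarrow> 'a::metric_space \<Rightarrow> 'a \<Rightarrow> 'a" where
  "geo_comb t x y = (THE p. \<exists>g. geodesic_on g 0 (dist x y) \<and> g 0 = x \<and> g (dist x y) = y
                                 \<and> p = g (t * dist x y))"

definition geo_convex :: "('a::metric_space \<Rightarrow> ereal) \<Rightarrow> bool" where
  "geo_convex f \<longleftrightarrow> (\<forall>x y t. 0 \<le> t \<and> t \<le> 1 \<longrightarrow>
      f (geo_comb t x y) \<le> ereal (1 - t) * f x + ereal t * f y)"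

definition proper_fun :: "('a \<Rightarrow> ereal) \<Rightarrow> bool" where
  "proper_fun f \<longleftrightarrow> (\<forall>x. f x \<noteq> -\<infinity>) \<and> (\<exists>x. f x \<noteq> \<infinity>)"

definition lsc :: "('a::topological_space \<Rightarrow> ereal) \<Rightarrow> bool" where
  "lsc f \<longleftrightarrow> (\<forall>x c. c < f x \<longrightarrow> (\<forall>\<^sub>F y in nhds x. c < f y))"

definition resolvent :: "('a::metric_space \<Rightarrow> ereal) \<Rightarrow> real \<Rightarrow> 'a \<Rightarrow> 'a" where
  "resolvent f gam x = (THE y. \<forall>z. f y + ereal ((dist x y)\<^sup>2 / (2 * gam))
                                    \<le> f z + ereal ((dist x z)\<^sup>2 / (2 * gam)))"

definition jointly_firmly_nonexpansive ::
  "(nat \<Rightarrow> 'a::metric_space \<Rightarrow> 'a) \<Rightarrow> (nat \<Rightarrow> real) \<Rightarrow> bool" where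
  "jointly_firmly_nonexpansive T gam \<longleftrightarrow>
     (\<forall>n m x y \<alpha> \<beta>. 0 \<le> \<alpha> \<and> \<alpha> \<le> 1 \<and> 0 \<le> \<beta> \<and> \<beta> \<le> 1 \<and>
        (1 - \<alpha>) * gam n = (1 - \<beta>) * gam m \<longrightarrow>
        dist (T n x) (T m y) \<le> dist (geo_comb \<alpha> x (T n x)) (geo_comb \<beta> y (T m y)))"

end

theory Submission
  imports Defs
begin


lemma cat0_geo_ex:
  assumes "CAT0 TYPE('a::metric_space)"
  shows "\<exists>g. geodesic_on g 0 (dist x y) \<and> g 0 = x \<and> g (dist x y) = (y::'a)"
  using assms unfolding CAT0_def geodesic_space_def by blast

lemma cat0_ineq:
  assumes "CAT0 TYPE('a::metric_space)" "geodesic_on g a b" "0 \<le> t" "t \<le> 1"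
  shows "(dist (z::'a) (g ((1 - t) * a + t * b)))\<^sup>2
          \<le> (1 - t) * (dist z (g a))\<^sup>2 + t * (dist z (g b))\<^sup>2
             - t * (1 - t) * (dist (g a) (g b))\<^sup>2"
  using assms unfolding CAT0_def by blast

lemma geod_dist:
  assumes "geodesic_on g a b" "s \<in> {a..b}" "t \<in> {a..b}"
  shows "dist (g s) (g t) = \<bar>s - t\<bar>"
  using assms unfolding geodesic_on_def by blast

lemma geod_unique:
  assumes C: "CAT0 TYPE('a::metric_space)"
    and g1: "geodesic_on g1 0 L" "g1 0 = (x::'a)" "g1 L = y"
    and g2: "geodesic_on g2 0 L" "g2 0 = x" "g2 L = y"
    and s: "0 \<le> s" "s \<le> L"
  shows "g1 s = g2 s"
proof (cases "L = 0")
  case True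
  then have "s = 0" using s by simp
  then show ?thesis using g1 g2 by simp
next
  case False
  then have Lpos: "L > 0" using s by simp
  define t where "t = s / L"
  have t01: "0 \<le> t" "t \<le> 1" using s Lpos by (auto simp: t_def field_simps)
  have sL: "s = t * L" using Lpos by (simp add: t_def)
  have st: "(1 - t) * 0 + t * L = s" using sL by simp
  have "(dist (g2 s) (g1 s))\<^sup>2 \<le> (1 - t) * (dist (g2 s) (g1 0))\<^sup>2 + t * (dist (g2 s) (g1 L))\<^sup>2
             - t * (1 - t) * (dist (g1 0) (g1 L))\<^sup>2"
    using cat0_ineq[OF C g1(1) t01, of "g2 s"] st by simp
  moreover have "dist (g2 s) (g1 0) = s" using geod_dist[OF g2(1), of s 0] s g1(2) g2(2) by simp
  moreover have "dist (g2 s) (g1 L) = L - s" using geod_dist[OF g2(1), of s L] s g1(3) g2(3) by simp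
  moreover have "dist (g1 0) (g1 L) = L" using geod_dist[OF g1(1), of 0 L] s by simp
  ultimately have "(dist (g2 s) (g1 s))\<^sup>2 \<le> (1 - t) * s\<^sup>2 + t * (L - s)\<^sup>2 - t * (1 - t) * L\<^sup>2" by simp
  also have "\<dots> = 0" unfolding sL by algebra
  finally show ?thesis by simp
qed

lemma geo_comb_eq:
  assumes C: "CAT0 TYPE('a::metric_space)"
    and g: "geodesic_on g 0 (dist x y)" "g 0 = (x::'a)" "g (dist x y) = y"
    and t: "0 \<le> t" "t \<le> 1"
  shows "geo_comb t x y = g (t * dist x y)"
  unfolding geo_comb_def
proof (rule the_equality)
  show "\<exists>g'. geodesic_on g' 0 (dist x y) \<and> g' 0 = x \<and> g' (dist x y) = y \<and> g (t * dist x y) = g' (t * dist x y)"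
    using g by blast
next
  fix p assume "\<exists>g'. geodesic_on g' 0 (dist x y) \<and> g' 0 = x \<and> g' (dist x y) = y \<and> p = g' (t * dist x y)"
  then obtain g' where g': "geodesic_on g' 0 (dist x y)" "g' 0 = x" "g' (dist x y) = y" "p = g' (t * dist x y)"
    by blast
  have "0 \<le> t * dist x y" "t * dist x y \<le> dist x y" using t by (auto simp: mult_left_le_one_le)
  then show "p = g (t * dist x y)" using geod_unique[OF C g'(1-3) g] g'(4) by simp
qed

lemma gc_props:
  assumes C: "CAT0 TYPE('a::metric_space)" and t: "0 \<le> t" "t \<le> 1"
  shows "dist x (geo_comb t x y) = t * dist x (y::'a)"
    and "dist (geo_comb t x y) y = (1 - t) * dist x y"
    and "(dist z (geo_comb t x y))\<^sup>2 \<le> (1 - t) * (dist z x)\<^sup>2 + t * (dist z y)\<^sup>2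
             - t * (1 - t) * (dist x y)\<^sup>2"
proof -
  obtain g where g: "geodesic_on g 0 (dist x y)" "g 0 = x" "g (dist x y) = y"
    using cat0_geo_ex[OF C] by blast
  have e: "geo_comb t x y = g (t * dist x y)" using geo_comb_eq[OF C g t] .
  have r: "0 \<le> t * dist x y" "t * dist x y \<le> dist x y" using t by (auto simp: mult_left_le_one_le)
  show "dist x (geo_comb t x y) = t * dist x y"
    using geod_dist[OF g(1), of 0 "t * dist x y"] r g(2) e by simp
  show "dist (geo_comb t x y) y = (1 - t) * dist x y"
    using geod_dist[OF g(1), of "t * dist x y" "dist x y"] r g(3) e by (simp add: algebra_simps)
  show "(dist z (geo_comb t x y))\<^sup>2 \<le> (1 - t) * (dist z x)\<^sup>2 + t * (dist z y)\<^sup>2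
             - t * (1 - t) * (dist x y)\<^sup>2"
    using cat0_ineq[OF C g(1) t, of z] g e by simp
qed

lemma gc_one:
  assumes C: "CAT0 TYPE('a::metric_space)"
  shows "geo_comb 1 x y = (y::'a)"
  using gc_props(2)[OF C, of 1 x y] by simp

lemma quad:
  assumes C: "CAT0 TYPE('a::metric_space)"
  shows "(dist a c)\<^sup>2 + (dist b d)\<^sup>2 \<le> (dist a b)\<^sup>2 + (dist b c)\<^sup>2 + (dist c d)\<^sup>2 + (dist d (a::'a))\<^sup>2"
proof -
  define m where "m = geo_comb (1/2) a c"
  have 1: "(dist b m)\<^sup>2 \<le> (1/2) * (dist b a)\<^sup>2 + (1/2) * (dist b c)\<^sup>2 - (1/4) * (dist a c)\<^sup>2"
    using gc_props(3)[OF C, of "1/2" b a c] unfolding m_def by simp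
  have 2: "(dist d m)\<^sup>2 \<le> (1/2) * (dist d a)\<^sup>2 + (1/2) * (dist d c)\<^sup>2 - (1/4) * (dist a c)\<^sup>2"
    using gc_props(3)[OF C, of "1/2" d a c] unfolding m_def by simp
  have 3: "dist b d \<le> dist b m + dist d m" by (metis dist_commute dist_triangle)
  have "(dist b d)\<^sup>2 \<le> (dist b m + dist d m)\<^sup>2" using 3 by (simp add: power_mono)
  also have "\<dots> \<le> 2 * (dist b m)\<^sup>2 + 2 * (dist d m)\<^sup>2"
  proof -
    have "(dist b m + dist d m)\<^sup>2 + (dist b m - dist d m)\<^sup>2 = 2 * (dist b m)\<^sup>2 + 2 * (dist d m)\<^sup>2"
      by algebra
    then show ?thesis using zero_le_power2[of "dist b m - dist d m"] by linarith
  qed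
  finally show ?thesis using 1 2 by (simp add: dist_commute)
qed



definition ismin :: "('a::metric_space \<Rightarrow> ereal) \<Rightarrow> real \<Rightarrow> 'a \<Rightarrow> 'a \<Rightarrow> bool" where
  "ismin f gam x u \<longleftrightarrow> (\<forall>z. f u + ereal ((dist x u)\<^sup>2 / (2 * gam))
                                    \<le> f z + ereal ((dist x z)\<^sup>2 / (2 * gam)))"

lemma conv_real:
  assumes "geo_convex f" "f x = ereal a" "f y = ereal b" "0 \<le> t" "t \<le> 1"
  shows "f (geo_comb t x y) \<le> ereal ((1 - t) * a + t * b)"
  using assms unfolding geo_convex_def by (metis times_ereal.simps(1) plus_ereal.simps(1))

lemma conv_real2:
  assumes "geo_convex f" "proper_fun f" "f x = ereal a" "f y = ereal b" "0 \<le> t" "t \<le> 1"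
  obtains c where "f (geo_comb t x y) = ereal c" "c \<le> (1 - t) * a + t * b"
proof -
  have le: "f (geo_comb t x y) \<le> ereal ((1 - t) * a + t * b)" using conv_real assms by blast
  have "f (geo_comb t x y) \<noteq> -\<infinity>" using assms(2) unfolding proper_fun_def by blast
  then show ?thesis using le that by (cases "f (geo_comb t x y)") auto
qed

lemma le_lim:
  fixes A B c :: real
  assumes "\<And>t. 0 < t \<Longrightarrow> t \<le> 1 \<Longrightarrow> A \<le> B + t * c" "c \<ge> 0"
  shows "A \<le> B"
proof (rule ccontr)
  assume "\<not> A \<le> B"
  then have d: "A - B > 0" by simp
  define t where "t = min 1 ((A - B) / (2 * (c + 1)))"
  have t0: "t > 0" using d assms(2) by (simp add: t_def)
  have t1: "t \<le> 1" by (simp add: t_def)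
  have "t \<le> (A - B) / (2 * (c + 1))" by (simp add: t_def)
  then have "t * c \<le> ((A - B) / (2 * (c + 1))) * c" using assms(2) by (rule mult_right_mono)
  also have "\<dots> < A - B" using d assms(2) mult_right_mono[of B A c] by (simp add: field_simps)
  finally show False using assms(1)[OF t0 t1] by simp
qed

lemma VI:
  assumes C: "CAT0 TYPE('a::metric_space)" and cv: "geo_convex f" and pr: "proper_fun f"
    and gam: "gam > 0" and m: "ismin f gam x u" and fu: "f u = ereal a" and fz: "f z = ereal b"
  shows "a + ((dist x u)\<^sup>2 + (dist u z)\<^sup>2 - (dist x (z::'a))\<^sup>2) / (2*gam) \<le> b"
proof -
  define D where "D = dist x u"
  define W where "W = dist u z"
  define X where "X = dist x z"
  have "a + (D\<^sup>2 + W\<^sup>2 - X\<^sup>2) / (2*gam) \<le> b + t * (W\<^sup>2 / (2 * gam))" if t: "0 < t" "t \<le> 1" for t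
  proof -
    define w where "w = geo_comb t u z"
    obtain c where c: "f w = ereal c" "c \<le> (1 - t) * a + t * b"
      using conv_real2[OF cv pr fu fz, of t] t unfolding w_def by auto
    have "f u + ereal ((dist x u)\<^sup>2 / (2 * gam)) \<le> f w + ereal ((dist x w)\<^sup>2 / (2 * gam))"
      using m unfolding ismin_def by blast
    then have h1: "a + D\<^sup>2 / (2 * gam) \<le> c + (dist x w)\<^sup>2 / (2 * gam)" using fu c(1) by (simp add: D_def)
    have h2: "(dist x w)\<^sup>2 \<le> (1 - t) * D\<^sup>2 + t * X\<^sup>2 - t * (1 - t) * W\<^sup>2"
      using gc_props(3)[OF C, of t x u z] t unfolding w_def D_def X_def W_def by simp
    have "(a + D\<^sup>2 / (2 * gam)) * (2*gam) \<le> (c + (dist x w)\<^sup>2 / (2 * gam)) * (2*gam)"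
      using h1 gam by (intro mult_right_mono) auto
    then have "a * (2*gam) + D\<^sup>2 \<le> c * (2*gam) + (dist x w)\<^sup>2" using gam by (simp add: distrib_right)
    then have "a * (2*gam) + D\<^sup>2 \<le> ((1 - t) * a + t * b) * (2*gam) + (1 - t) * D\<^sup>2 + t * X\<^sup>2 - t * (1 - t) * W\<^sup>2"
      using h2 c(2) gam by (smt (verit) mult_right_mono)
    then have "t * (a * (2*gam) + D\<^sup>2) \<le> t * (b * (2*gam) + X\<^sup>2 - (1 - t) * W\<^sup>2)"
      by (simp add: algebra_simps)
    then have "a * (2*gam) + D\<^sup>2 \<le> b * (2*gam) + X\<^sup>2 - (1 - t) * W\<^sup>2" using t by simp
    then have "a * (2*gam) + (D\<^sup>2 + W\<^sup>2 - X\<^sup>2) \<le> b * (2*gam) + t * W\<^sup>2" by (simp add: algebra_simps)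
    then have "(a * (2*gam) + (D\<^sup>2 + W\<^sup>2 - X\<^sup>2)) / (2*gam) \<le> (b * (2*gam) + t * W\<^sup>2) / (2*gam)"
      by (rule divide_right_mono) (use gam in simp)
    then show ?thesis using gam by (simp add: add_divide_distrib)
  qed
  then have "a + (D\<^sup>2 + W\<^sup>2 - X\<^sup>2) / (2*gam) \<le> b"
  proof (rule le_lim)
    show "0 \<le> W\<^sup>2 / (2 * gam)" using gam by (intro divide_nonneg_pos) auto
  qed
  then show ?thesis by (simp add: D_def W_def X_def)
qed



lemma alg_shift:
  fixes s gam D W X r a0 b :: real
  assumes s: "0 < s" "s \<le> 1" and gam: "gam > 0" and nn: "D \<ge> 0" "W \<ge> 0" "X \<ge> 0" "r \<ge> 0"
    and t1: "X \<le> (1 - s) * D + r" and t2: "\<bar>r - s * D\<bar> \<le> W"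
    and vi: "a0 + (D\<^sup>2 + W\<^sup>2 - X\<^sup>2) / (2*gam) \<le> b"
  shows "a0 + (s * D)\<^sup>2 / (2 * (s * gam)) \<le> b + r\<^sup>2 / (2 * (s * gam))"
proof -
  have w2: "(r - s * D)\<^sup>2 \<le> W\<^sup>2" using t2 by (metis abs_ge_zero power2_abs power_mono)
  have x2: "X\<^sup>2 \<le> ((1 - s) * D + r)\<^sup>2" using t1 nn by (simp add: power_mono)
  have id: "s * ((1 - s) * D + r)\<^sup>2 - s * (r - s * D)\<^sup>2 - s * (1 - s) * D\<^sup>2 = r\<^sup>2 - (r - s * D)\<^sup>2"
    by algebra
  have "s * X\<^sup>2 \<le> s * ((1 - s) * D + r)\<^sup>2" using x2 s by simp
  moreover have "s * (r - s * D)\<^sup>2 \<le> s * W\<^sup>2" using w2 s by simp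
  ultimately have key: "s * X\<^sup>2 - s * W\<^sup>2 - s * (1 - s) * D\<^sup>2 \<le> r\<^sup>2" using id zero_le_power2[of "r - s*D"] by linarith
  have vi2: "a0 * (2*gam) + (D\<^sup>2 + W\<^sup>2 - X\<^sup>2) \<le> b * (2*gam)"
  proof -
    have "(a0 + (D\<^sup>2 + W\<^sup>2 - X\<^sup>2) / (2*gam)) * (2*gam) \<le> b * (2*gam)"
      using vi gam by (intro mult_right_mono) auto
    then show ?thesis using gam by (simp add: distrib_right)
  qed
  have "s * (a0 * (2*gam) + (D\<^sup>2 + W\<^sup>2 - X\<^sup>2)) \<le> s * (b * (2*gam))" using vi2 s by simp
  then have "a0 * (2 * (s * gam)) + (s * D)\<^sup>2 \<le> b * (2 * (s * gam)) + r\<^sup>2"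
    using key by (simp add: algebra_simps power2_eq_square)
  then have "(a0 * (2 * (s * gam)) + (s * D)\<^sup>2) / (2 * (s * gam)) \<le> (b * (2 * (s * gam)) + r\<^sup>2) / (2 * (s * gam))"
    by (rule divide_right_mono) (use s gam in simp)
  then show ?thesis using s gam by (simp add: add_divide_distrib)
qed

lemma shift:
  assumes C: "CAT0 TYPE('a::metric_space)" and cv: "geo_convex f" and pr: "proper_fun f"
    and gam: "gam > 0" and m: "ismin f gam x u" and fu: "f u = ereal a0"
    and al: "0 \<le> \<alpha>" "\<alpha> < 1"
  shows "ismin f ((1 - \<alpha>) * gam) (geo_comb \<alpha> x u) (u::'a)"
  unfolding ismin_def
proof
  fix z
  define p where "p = geo_comb \<alpha> x u"
  define s where "s = 1 - \<alpha>"
  have s: "0 < s" "s \<le> 1" using al by (auto simp: s_def)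
  have dxp: "dist x p = (1 - s) * dist x u" using gc_props(1)[OF C, of \<alpha> x u] al by (simp add: p_def s_def)
  have dpu: "dist p u = s * dist x u" using gc_props(2)[OF C, of \<alpha> x u] al by (simp add: p_def s_def)
  show "f u + ereal ((dist p u)\<^sup>2 / (2 * ((1 - \<alpha>) * gam))) \<le> f z + ereal ((dist p z)\<^sup>2 / (2 * ((1 - \<alpha>) * gam)))"
  proof (cases "f z")
    case (real b)
    have vi: "a0 + ((dist x u)\<^sup>2 + (dist u z)\<^sup>2 - (dist x z)\<^sup>2) / (2*gam) \<le> b"
      using VI[OF C cv pr gam m fu real] .
    have t1: "dist x z \<le> (1 - s) * dist x u + dist p z" using dist_triangle[of x z p] dxp by simp
    have t2: "\<bar>dist p z - s * dist x u\<bar> \<le> dist u z"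
      using dist_triangle[of p z u] dist_triangle[of p u z] dpu by (simp add: abs_le_iff dist_commute)
    have "a0 + (s * dist x u)\<^sup>2 / (2 * (s * gam)) \<le> b + (dist p z)\<^sup>2 / (2 * (s * gam))"
      by (rule alg_shift[OF s gam _ _ _ _ t1 t2 vi]) auto
    then show ?thesis using fu real dpu by (simp add: s_def)
  next
    case PInf
    then show ?thesis using fu by simp
  next
    case MInf
    then show ?thesis using pr unfolding proper_fun_def by blast
  qed
qed



lemma aux_lin:
  fixes P A B E c b1 b2 :: real
  shows "P \<le> (A + B) / 2 - E \<Longrightarrow> c \<le> (1 - 1/2) * b1 + 1/2 * b2 \<Longrightarrow> c + P \<le> ((b1 + A) + (b2 + B)) / 2 - E"
  by (simp add: field_simps)

lemma midpt:
  assumes C: "CAT0 TYPE('a::metric_space)" and cv: "geo_convex f" and pr: "proper_fun f"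
    and gam: "gam > 0" and f1: "f y1 = ereal b1" and f2: "f y2 = ereal b2"
  obtains c where "f (geo_comb (1/2) y1 y2) = ereal c"
    "c + (dist x (geo_comb (1/2) y1 y2))\<^sup>2 / (2*gam)
       \<le> ((b1 + (dist x y1)\<^sup>2 / (2*gam)) + (b2 + (dist x (y2::'a))\<^sup>2 / (2*gam))) / 2
          - (dist y1 y2)\<^sup>2 / (8*gam)"
proof -
  define m where "m = geo_comb (1/2) y1 y2"
  obtain c where c: "f m = ereal c" "c \<le> (1 - 1/2) * b1 + 1/2 * b2"
    using conv_real2[OF cv pr f1 f2, of "1/2"] unfolding m_def by auto
  have d: "(dist x m)\<^sup>2 \<le> (1 - 1/2) * (dist x y1)\<^sup>2 + 1/2 * (dist x y2)\<^sup>2 - 1/2 * (1 - 1/2) * (dist y1 y2)\<^sup>2"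
    using gc_props(3)[OF C, of "1/2" x y1 y2] unfolding m_def by simp
  have "(dist x m)\<^sup>2 / (2*gam) \<le> ((1 - 1/2) * (dist x y1)\<^sup>2 + 1/2 * (dist x y2)\<^sup>2 - 1/2 * (1 - 1/2) * (dist y1 y2)\<^sup>2) / (2*gam)"
    using d gam by (intro divide_right_mono) auto
  also have "\<dots> = ((dist x y1)\<^sup>2 / (2*gam) + (dist x y2)\<^sup>2 / (2*gam)) / 2 - (dist y1 y2)\<^sup>2 / (8*gam)"
    using gam by (simp add: field_simps)
  finally have "c + (dist x m)\<^sup>2 / (2*gam) \<le> ((b1 + (dist x y1)\<^sup>2 / (2*gam)) + (b2 + (dist x y2)\<^sup>2 / (2*gam))) / 2
          - (dist y1 y2)\<^sup>2 / (8*gam)" using c(2) aux_lin by blast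
  then show ?thesis using that c(1) unfolding m_def by blast
qed

lemma ismin_fin:
  assumes pr: "proper_fun f" and m: "ismin f gam x u"
  shows "\<exists>a. f u = ereal a"
proof -
  obtain z0 where z0: "f z0 \<noteq> \<infinity>" using pr unfolding proper_fun_def by blast
  have "f u + ereal ((dist x u)\<^sup>2 / (2 * gam)) \<le> f z0 + ereal ((dist x z0)\<^sup>2 / (2 * gam))"
    using m unfolding ismin_def by blast
  moreover have "f z0 + ereal ((dist x z0)\<^sup>2 / (2 * gam)) \<noteq> \<infinity>" using z0 by simp
  ultimately have "f u \<noteq> \<infinity>" by auto
  moreover have "f u \<noteq> -\<infinity>" using pr unfolding proper_fun_def by blast
  ultimately show ?thesis by (cases "f u") auto
qed

lemma ismin_unique:
  assumes C: "CAT0 TYPE('a::metric_space)" and cv: "geo_convex f" and pr: "proper_fun f"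
    and gam: "gam > 0" and m1: "ismin f gam x u1" and m2: "ismin f gam x (u2::'a)"
  shows "u1 = u2"
proof -
  obtain b1 where f1: "f u1 = ereal b1" using ismin_fin[OF pr m1] by blast
  obtain b2 where f2: "f u2 = ereal b2" using ismin_fin[OF pr m2] by blast
  define G1 where "G1 = b1 + (dist x u1)\<^sup>2 / (2*gam)"
  define G2 where "G2 = b2 + (dist x u2)\<^sup>2 / (2*gam)"
  have "G1 \<le> G2" using m1 f1 f2 unfolding ismin_def G1_def G2_def by (metis plus_ereal.simps(1) ereal_less_eq(3))
  moreover have "G2 \<le> G1" using m2 f1 f2 unfolding ismin_def G1_def G2_def by (metis plus_ereal.simps(1) ereal_less_eq(3))
  ultimately have eq: "G1 = G2" by simp
  obtain c where c: "f (geo_comb (1/2) u1 u2) = ereal c"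
    "c + (dist x (geo_comb (1/2) u1 u2))\<^sup>2 / (2*gam) \<le> (G1 + G2) / 2 - (dist u1 u2)\<^sup>2 / (8*gam)"
    using midpt[OF C cv pr gam f1 f2, of x] unfolding G1_def G2_def by blast
  have "G1 \<le> c + (dist x (geo_comb (1/2) u1 u2))\<^sup>2 / (2*gam)"
    using m1 f1 c(1) unfolding ismin_def G1_def by (metis plus_ereal.simps(1) ereal_less_eq(3))
  then have "(dist u1 u2)\<^sup>2 / (8*gam) \<le> 0" using c(2) eq by simp
  then have "(dist u1 u2)\<^sup>2 \<le> 0" using gam by (simp add: divide_le_0_iff)
  then show ?thesis by simp
qed



lemma aux_lin2:
  fixes mu c P A B Q r1 r2 :: real
  shows "mu \<le> c + P \<Longrightarrow> c + P \<le> (A+B)/2 - Q \<Longrightarrow> A < mu + r1 \<Longrightarrow> B < mu + r2 \<Longrightarrow> Q \<le> (r1+r2)/2"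
  by (simp add: field_simps)

lemma aux_lin3:
  fixes D gam r :: real assumes "gam > 0" "D / (8*gam) \<le> r / 2"
  shows "D \<le> 4 * gam * r"
  using assms by (simp add: field_simps)

lemma lower_lin:
  assumes C: "CAT0 TYPE('a::metric_space)" and cv: "geo_convex f" and pr: "proper_fun f"
    and ls: "lsc f" and z0: "f z0 = ereal a0"
  obtains K where "K \<ge> 0" "\<And>y b. f y = ereal b \<Longrightarrow> a0 - 1 - K * dist z0 (y::'a) \<le> b"
proof -
  have "ereal (a0 - 1) < f z0" using z0 by simp
  then have "\<forall>\<^sub>F y in nhds z0. ereal (a0 - 1) < f y" using ls unfolding lsc_def by blast
  then obtain d where d: "d > 0" "\<And>y. dist y z0 < d \<Longrightarrow> ereal (a0 - 1) < f y"
    unfolding eventually_nhds_metric by blast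
  have "a0 - 1 - (2 / d) * dist z0 y \<le> b" if fy: "f y = ereal b" for y b
  proof (cases "dist z0 y < d")
    case True
    then have "a0 - 1 < b" using d(2)[of y] fy by (simp add: dist_commute)
    moreover have "(2 / d) * dist z0 y \<ge> 0" using d by simp
    ultimately show ?thesis by linarith
  next
    case False
    then have Dge: "dist z0 y \<ge> d" by simp
    define t where "t = d / (2 * dist z0 y)"
    have Dp: "dist z0 y > 0" using d Dge by linarith
    have t0: "t > 0" using d Dp by (simp add: t_def)
    have t1: "t \<le> 1" using d Dge Dp by (simp add: t_def pos_divide_le_eq)
    define w where "w = geo_comb t z0 y"
    have "dist z0 w = t * dist z0 y" using gc_props(1)[OF C, of t z0 y] t0 t1 by (simp add: w_def)
    also have "\<dots> = d / 2" using d Dp by (simp add: t_def)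
    finally have "dist w z0 < d" using d by (simp add: dist_commute)
    then have lt: "ereal (a0 - 1) < f w" using d(2) by blast
    obtain c where c: "f w = ereal c" "c \<le> (1 - t) * a0 + t * b"
      using conv_real2[OF cv pr z0 fy, of t] t0 t1 unfolding w_def by auto
    have "a0 - 1 < (1 - t) * a0 + t * b" using lt c by simp
    then have "t * (a0 - b) < 1" by (simp add: algebra_simps)
    then have "a0 - b < 1 / t" using t0 by (simp add: field_simps)
    also have "1 / t = (2 / d) * dist z0 y" using d Dge by (simp add: t_def)
    finally show ?thesis by simp
  qed
  then show ?thesis using that[of "2 / d"] d by simp
qed

lemma exists_min:
  assumes C: "CAT0 TYPE('a::complete_space)" and cv: "geo_convex f" and pr: "proper_fun f"
    and ls: "lsc f" and gam: "gam > 0"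
  shows "\<exists>u. ismin f gam (x::'a) u"
proof -
  obtain z0 where z0': "f z0 \<noteq> \<infinity>" using pr unfolding proper_fun_def by blast
  moreover have "f z0 \<noteq> -\<infinity>" using pr unfolding proper_fun_def by blast
  ultimately obtain a0 where z0: "f z0 = ereal a0" by (cases "f z0") auto
  obtain K where K: "K \<ge> 0" "\<And>y b. f y = ereal b \<Longrightarrow> a0 - 1 - K * dist z0 y \<le> b"
    using lower_lin[OF C cv pr ls z0] by blast
  define L0 where "L0 = a0 - 1 - K * dist z0 x - K\<^sup>2 * gam / 2"
  define S where "S = {b + (dist x y)\<^sup>2 / (2*gam) | y b. f y = ereal b}"
  have Slb: "L0 \<le> s" if sS: "s \<in> S" for s
  proof -
    obtain y b where yb: "f y = ereal b" "s = b + (dist x y)\<^sup>2 / (2*gam)" using sS unfolding S_def by blast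
    define e where "e = dist x y"
    have "dist z0 y \<le> dist z0 x + e" unfolding e_def by (rule dist_triangle)
    then have "K * dist z0 y \<le> K * dist z0 x + K * e" using K(1) by (metis distrib_left mult_left_mono)
    then have b1: "a0 - 1 - K * dist z0 x - K * e \<le> b" using K(2)[OF yb(1)] by linarith
    have "e\<^sup>2/(2*gam) - (K*e - K\<^sup>2*gam/2) = (e - K*gam)\<^sup>2/(2*gam)"
      using gam by (simp add: field_simps power2_eq_square)
    moreover have "(e - K*gam)\<^sup>2/(2*gam) \<ge> 0" using gam by simp
    ultimately have "K * e - K\<^sup>2 * gam / 2 \<le> e\<^sup>2 / (2*gam)" by linarith
    then show ?thesis using b1 yb(2) unfolding L0_def e_def by linarith
  qed
  have Sne: "S \<noteq> {}" using z0 unfolding S_def by blast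
  have bdd: "bdd_below S" using Slb by (rule bdd_belowI)
  define mu where "mu = Inf S"
  have mule: "mu \<le> s" if "s \<in> S" for s using cInf_lower[OF that bdd] unfolding mu_def .
  have "\<exists>y b. f y = ereal b \<and> b + (dist x y)\<^sup>2 / (2*gam) < mu + 1 / (real n + 1)" for n
  proof -
    have "Inf S < mu + 1 / (real n + 1)" unfolding mu_def by simp
    then obtain s where "s \<in> S" "s < mu + 1 / (real n + 1)" using cInf_lessD[OF Sne] by blast
    then show ?thesis unfolding S_def by blast
  qed
  then obtain ys bs where ysb: "\<And>n. f (ys n) = ereal (bs n)"
    "\<And>n. bs n + (dist x (ys n))\<^sup>2 / (2*gam) < mu + 1 / (real n + 1)"
    by metis
  define G where "G n = bs n + (dist x (ys n))\<^sup>2 / (2*gam)" for n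
  have Gge: "mu \<le> G n" for n using mule[of "G n"] ysb(1) unfolding S_def G_def by blast
  have Glt: "G n < mu + 1 / (real n + 1)" for n using ysb(2) unfolding G_def by simp
  have cd: "(dist (ys n) (ys k))\<^sup>2 \<le> 4 * gam * (1 / (real n + 1) + 1 / (real k + 1))" for n k
  proof -
    obtain c where c: "f (geo_comb (1/2) (ys n) (ys k)) = ereal c"
      "c + (dist x (geo_comb (1/2) (ys n) (ys k)))\<^sup>2 / (2*gam)
       \<le> (G n + G k) / 2 - (dist (ys n) (ys k))\<^sup>2 / (8*gam)"
      using midpt[OF C cv pr gam ysb(1) ysb(1), of n k x] unfolding G_def by blast
    have "mu \<le> c + (dist x (geo_comb (1/2) (ys n) (ys k)))\<^sup>2 / (2*gam)"
      using mule c(1) unfolding S_def by blast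
    then have "(dist (ys n) (ys k))\<^sup>2 / (8*gam) \<le> (1 / (real n + 1) + 1 / (real k + 1)) / 2"
      using c(2) Glt[of n] Glt[of k] aux_lin2 by blast
    then show ?thesis using gam aux_lin3 by blast
  qed
  have "Cauchy ys"
  proof (rule metric_CauchyI)
    fix e :: real assume e: "e > 0"
    obtain M :: nat where M: "8 * gam / e\<^sup>2 < real M" using reals_Archimedean2 by blast
    show "\<exists>M. \<forall>m\<ge>M. \<forall>n\<ge>M. dist (ys m) (ys n) < e"
    proof (intro exI allI impI)
      fix m n assume mn: "M \<le> m" "M \<le> n"
      have i1: "1 / (real m + 1) \<le> 1 / (real M + 1)" using mn by (simp add: frac_le)
      have i2: "1 / (real n + 1) \<le> 1 / (real M + 1)" using mn by (simp add: frac_le)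
      have "(dist (ys m) (ys n))\<^sup>2 \<le> 4 * gam * (1 / (real m + 1) + 1 / (real n + 1))" by (rule cd)
      also have "\<dots> \<le> 4 * gam * (1 / (real M + 1) + 1 / (real M + 1))"
        using add_mono[OF i1 i2] gam by (intro mult_left_mono) auto
      also have "\<dots> = 8 * gam / (real M + 1)" by simp
      also have "\<dots> < e\<^sup>2"
      proof -
        have "8 * gam / e\<^sup>2 < real M + 1" using M by simp
        then have "8 * gam < (real M + 1) * e\<^sup>2" using e by (simp add: field_simps)
        then show ?thesis by (simp add: field_simps)
      qed
      finally have "(dist (ys m) (ys n))\<^sup>2 < e\<^sup>2" .
      then show "dist (ys m) (ys n) < e" using e by (simp add: power_less_imp_less_base)
    qed
  qed
  then obtain ystar where lim: "ys \<longlonglongrightarrow> ystar" using Cauchy_convergent convergent_def by blast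
  define ds where "ds = (dist x ystar)\<^sup>2 / (2*gam)"
  have fle: "f ystar \<le> ereal (mu - ds)"
  proof (rule ccontr)
    assume "\<not> f ystar \<le> ereal (mu - ds)"
    then have "ereal (mu - ds) < f ystar" by simp
    then obtain c where c0: "ereal (mu - ds) < ereal c" "ereal c < f ystar" using ereal_dense2 by blast
    then have c: "mu - ds < c" "ereal c < f ystar" by simp_all
    define eps where "eps = (c - (mu - ds)) / 2"
    have eps: "eps > 0" using c unfolding eps_def by simp
    have "\<forall>\<^sub>F y in nhds ystar. ereal c < f y" using ls c(2) unfolding lsc_def by blast
    then obtain d where d: "d > 0" "\<And>y. dist y ystar < d \<Longrightarrow> ereal c < f y"
      unfolding eventually_nhds_metric by blast
    obtain N1 where N1: "\<And>n. n \<ge> N1 \<Longrightarrow> dist (ys n) ystar < d" using metric_LIMSEQ_D[OF lim d(1)] by blast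
    have hl: "(\<lambda>n. (dist x (ys n))\<^sup>2 / (2*gam)) \<longlonglongrightarrow> ds"
      unfolding ds_def using gam by (auto intro!: tendsto_intros lim)
    obtain N2 where N2: "\<And>n. n \<ge> N2 \<Longrightarrow> dist ((dist x (ys n))\<^sup>2 / (2*gam)) ds < eps"
      using metric_LIMSEQ_D[OF hl eps] by blast
    obtain N3 :: nat where N3: "1 / eps < real N3" using reals_Archimedean2 by blast
    define n where "n = max N1 (max N2 N3)"
    have a1: "c < bs n" using d(2)[OF N1[of n]] ysb(1)[of n] unfolding n_def by simp
    have "n \<ge> N2" unfolding n_def by simp
    then have "\<bar>(dist x (ys n))\<^sup>2 / (2*gam) - ds\<bar> < eps" using N2[of n] unfolding dist_real_def by blast
    then have a2: "ds - eps < (dist x (ys n))\<^sup>2 / (2*gam)" by linarith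
    have "1 / eps < real n + 1" using N3 unfolding n_def by simp
    then have a3: "1 / (real n + 1) < eps" using eps by (simp add: field_simps)
    have "G n < mu + eps" using Glt[of n] a3 by simp
    moreover have "G n > mu + eps"
    proof -
      define hn where "hn = (dist x (ys n))\<^sup>2 / (2*gam)"
      have "G n = bs n + hn" unfolding G_def hn_def by simp
      moreover have "ds - (c - (mu - ds)) / 2 < hn" using a2 unfolding hn_def eps_def .
      ultimately show ?thesis using a1 unfolding eps_def by (simp add: field_simps)
    qed
    ultimately show False by simp
  qed
  have "f ystar \<noteq> -\<infinity>" using pr unfolding proper_fun_def by blast
  then obtain bst where bst: "f ystar = ereal bst" "bst \<le> mu - ds" using fle by (cases "f ystar") auto
  have "ismin f gam x ystar"
    unfolding ismin_def
  proof
    fix z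
    show "f ystar + ereal ((dist x ystar)\<^sup>2 / (2 * gam)) \<le> f z + ereal ((dist x z)\<^sup>2 / (2 * gam))"
    proof (cases "f z")
      case (real b)
      then have "mu \<le> b + (dist x z)\<^sup>2 / (2*gam)" using mule unfolding S_def by blast
      then show ?thesis using bst real unfolding ds_def by simp
    next
      case PInf then show ?thesis using bst by simp
    next
      case MInf then show ?thesis using pr unfolding proper_fun_def by blast
    qed
  qed
  then show ?thesis by blast
qed

lemma res_min:
  assumes C: "CAT0 TYPE('a::complete_space)" and cv: "geo_convex f" and pr: "proper_fun f"
    and ls: "lsc f" and gam: "gam > 0"
  shows "ismin f gam x (resolvent f gam x) \<and> (\<exists>a. f (resolvent f gam (x::'a)) = ereal a)"
proof -
  have eq: "resolvent f gam x = (THE y. ismin f gam x y)" unfolding resolvent_def ismin_def by simp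
  have "\<exists>!y. ismin f gam x y"
    using exists_min[OF C cv pr ls gam, of x] ismin_unique[OF C cv pr gam] by blast
  then have "ismin f gam x (resolvent f gam x)" unfolding eq by (rule theI')
  then show ?thesis using ismin_fin[OF pr] by blast
qed

theorem proposition3p17:
  fixes f :: "'a::complete_space \<Rightarrow> ereal" and gam :: "nat \<Rightarrow> real"
  assumes "CAT0 TYPE('a)"
    and "geo_convex f" and "proper_fun f" and "lsc f"
    and "\<And>n. gam n > 0"
  shows "jointly_firmly_nonexpansive (\<lambda>n. resolvent f (gam n)) gam"
  unfolding jointly_firmly_nonexpansive_def
proof (intro allI impI)
  note C = assms(1) and cv = assms(2) and pr = assms(3) and ls = assms(4) and gp = assms(5)
  fix n m x y \<alpha> \<beta>
  assume H: "0 \<le> \<alpha> \<and> \<alpha> \<le> 1 \<and> 0 \<le> \<beta> \<and> \<beta> \<le> 1 \<and> (1 - \<alpha>) * gam n = (1 - \<beta>) * gam m"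
  define u where "u = resolvent f (gam n) x"
  define v where "v = resolvent f (gam m) y"
  obtain a1 where mu: "ismin f (gam n) x u" and fu: "f u = ereal a1"
    using res_min[OF C cv pr ls gp, of n x] unfolding u_def by blast
  obtain a2 where mv: "ismin f (gam m) y v" and fv: "f v = ereal a2"
    using res_min[OF C cv pr ls gp, of m y] unfolding v_def by blast
  show "dist (resolvent f (gam n) x) (resolvent f (gam m) y)
        \<le> dist (geo_comb \<alpha> x (resolvent f (gam n) x)) (geo_comb \<beta> y (resolvent f (gam m) y))"
  proof (cases "\<alpha> = 1")
    case True
    then have "(1 - \<beta>) * gam m = 0" using H by simp
    then have "\<beta> = 1" using gp[of m] by simp
    then show ?thesis using True gc_one[OF C] by simp
  next
    case False
    then have al: "\<alpha> < 1" using H by simp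
    define a where "a = (1 - \<alpha>) * gam n"
    have apos: "a > 0" using al gp[of n] by (simp add: a_def)
    have be: "\<beta> < 1"
    proof (rule ccontr)
      assume "\<not> \<beta> < 1" then have "\<beta> = 1" using H by simp
      then show False using H al gp[of n] by simp
    qed
    have a2: "a = (1 - \<beta>) * gam m" using H by (simp add: a_def)
    define p where "p = geo_comb \<alpha> x u"
    define q where "q = geo_comb \<beta> y v"
    have mp: "ismin f a p u" using shift[OF C cv pr gp mu fu] H al unfolding a_def p_def by blast
    have mq: "ismin f a q v" using shift[OF C cv pr gp mv fv] H be unfolding a2 q_def by blast
    have v1: "a1 + ((dist p u)\<^sup>2 + (dist u v)\<^sup>2 - (dist p v)\<^sup>2) / (2*a) \<le> a2"
      using VI[OF C cv pr apos mp fu fv] .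
    have v2: "a2 + ((dist q v)\<^sup>2 + (dist v u)\<^sup>2 - (dist q u)\<^sup>2) / (2*a) \<le> a1"
      using VI[OF C cv pr apos mq fv fu] .
    have "((dist p u)\<^sup>2 + (dist u v)\<^sup>2 - (dist p v)\<^sup>2) / (2*a) + ((dist q v)\<^sup>2 + (dist v u)\<^sup>2 - (dist q u)\<^sup>2) / (2*a) \<le> 0"
      using v1 v2 by linarith
    then have "(((dist p u)\<^sup>2 + (dist u v)\<^sup>2 - (dist p v)\<^sup>2) + ((dist q v)\<^sup>2 + (dist v u)\<^sup>2 - (dist q u)\<^sup>2)) / (2*a) \<le> 0"
      by (simp add: add_divide_distrib)
    then have s0: "((dist p u)\<^sup>2 + (dist u v)\<^sup>2 - (dist p v)\<^sup>2) + ((dist q v)\<^sup>2 + (dist v u)\<^sup>2 - (dist q u)\<^sup>2) \<le> 0"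
      using apos by (simp add: divide_le_0_iff)
    have qd: "(dist p v)\<^sup>2 + (dist q u)\<^sup>2 \<le> (dist p q)\<^sup>2 + (dist q v)\<^sup>2 + (dist v u)\<^sup>2 + (dist u p)\<^sup>2"
      using quad[OF C, of p v q u] .
    have e1: "dist v u = dist u v" and e2: "dist u p = dist p u" by (simp_all add: dist_commute)
    have "(dist u v)\<^sup>2 \<le> (dist p q)\<^sup>2" using s0 qd unfolding e1 e2 by linarith
    then have "dist u v \<le> dist p q" by (rule power2_le_imp_le) simp
    then show ?thesis by (simp add: u_def v_def p_def q_def)
  qed
qed

end
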